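(* Given a system with a finitely observable state $\bar{x}_0$, the lower bound $D_\mathcal{O}^l(Y_{\bar{x}_{0:T}})$ on the degree of observability is a concave function with respect to the state sequence $x_{0:T}$ if the output maps are observability-regular.
   Context: Consider the discrete-time LTI system $x_{t+1} = Ax_t + Bu_t$, $y_t = Cx_t + \varepsilon_t$, with $x_t \in \mathcal{X}\subset\mathbb{R}^{n_x}$, $u_t\in\mathcal{U}\subset\mathbb{R}^{n_u}$, where the measurement uncertainty $\varepsilon_t$ is set-valued: the output at state $x$ is the ellipsoid $\mathcal{Y}_x = \{y \mid (y-Cx)^\top [Q(Cx)]^{-1}(y-Cx)\le 1\}$ with $Q(Cx)\succ 0$ state dependent. Let $\Lambda(\mathcal{Y}_x)$ denote the largest eigenvalue of $Q$ (the size of the uncertainty ellipsoid at $x$). Assumption: the map $x\mapsto\Lambda(\mathcal{Y}_x)$ is convex and uniformly bounded on a domain $\mathcal{S}\subset\mathcal{X}$ (or is replaced by a convex upper-bounding envelope). Its local Lipschitz constant is $L(\bar{x}) = 2M(\bar{x},r)/r$ with $M(\bar{x},r)=\max_{x\in B_r(\bar{x})}\Lambda(x)$, and $L$ is asserted to be convex in $\bar{x}$. The set distance is $d_s(\mathcal{A},\mathcal{B})=\inf\{\lVert v-w\rVert : v\in\mathcal{A}, w\in\mathcal{B}\}$, and for output tubes $Y_{x_{0:T}}=\{\mathcal{Y}_{x_0},\dots,\mathcal{Y}_{x_T}\}$ generated from initial state $x_0$ under input sequence $u_{0:T-1}$, the tube distance is $d_\Gamma(Y_{\bar{x}_{0:T}},Y_{x_{0:T}})=\sum_{t=0}^T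 d_s(\mathcal{Y}_{\bar{x}_t},\mathcal{Y}_{x_t})$. The system is finite horizon weakly observable at $\bar{x}_0$ if, for some $T>0$, for all $x_0$ in a neighborhood of $\bar{x}_0$ and all input sequences, $d_\Gamma(Y_{\bar{x}_{0:T}},Y_{x_{0:T}})>0$ exactly when $d(\bar{x}_0,x_0)>0$. The system is observability-regular if the convexity/boundedness assumption on $\Lambda$ holds and the system is finite horizon weakly observable. The degree of observability is $D_\mathcal{O}(Y_{\bar{x}_{0:T}})=\inf_{x_0:\lVert x_0-\bar{x}_0\rVert>\epsilon}\sum_{t=0}^T d_s(\mathcal{Y}_{\bar{x}_t},\mathcal{Y}_{x_t})$ (same inputs), and its lower bound is $D_\mathcal{O}^l(Y_{\bar{x}_{0:T}})=\sum_{t=0}^T\{\sigma_{\min}(CA^t)\epsilon-\sigma_{\max}(A^t)\epsilon L(\bar{x}_t)-2\Lambda(\mathcal{Y}_{\bar{x}_t})\}$, where $\sigma_{\min},\sigma_{\max}$ are the smallest and largest singular values and $\epsilon>0$ is a tolerance chosen large enough that this bound is positive. *)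

theory Defs
  imports "HOL-Analysis.Analysis"
begin

text \<open>Matrix power (the type real^'n^'n carries a componentwise multiplication,
  so the ordinary power operator would be the wrong notion).\<close>
fun matpow :: "real^'n^'n \<Rightarrow> nat \<Rightarrow> real^'n^'n" where
  "matpow A 0 = mat 1"
| "matpow A (Suc k) = A ** matpow A k"

definition eigenvalues :: "real^'n^'n \<Rightarrow> real set" where
  "eigenvalues M = {c. \<exists>v. v \<noteq> 0 \<and> M *v v = c *\<^sub>R v}"

definition lambda_max :: "real^'n^'n \<Rightarrow> real" where
  "lambda_max M = Max (eigenvalues M)"

definition lambda_min :: "real^'n^'n \<Rightarrow> real" where
  "lambda_min M = Min (eigenvalues M)"

definition sigma_max :: "real^'n^'m \<Rightarrow> real" where
  "sigma_max M = sqrt (lambda_max (transpose M ** M))"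

definition sigma_min :: "real^'n^'m \<Rightarrow> real" where
  "sigma_min M = sqrt (lambda_min (transpose M ** M))"

definition out_set :: "real^'n^'m \<Rightarrow> (real^'m \<Rightarrow> real^'m^'m) \<Rightarrow> real^'n \<Rightarrow> (real^'m) set" where
  "out_set C Q x = {y. (y - C *v x) \<bullet> (matrix_inv (Q (C *v x)) *v (y - C *v x)) \<le> 1}"

definition Lam :: "real^'n^'m \<Rightarrow> (real^'m \<Rightarrow> real^'m^'m) \<Rightarrow> real^'n \<Rightarrow> real" where
  "Lam C Q x = lambda_max (Q (C *v x))"

definition Mball :: "real^'n^'m \<Rightarrow> (real^'m \<Rightarrow> real^'m^'m) \<Rightarrow> real \<Rightarrow> real^'n \<Rightarrow> real" where
  "Mball C Q r xb = (SUP x\<in>cball xb r. Lam C Q x)"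

definition Lip :: "real^'n^'m \<Rightarrow> (real^'m \<Rightarrow> real^'m^'m) \<Rightarrow> real \<Rightarrow> real^'n \<Rightarrow> real" where
  "Lip C Q r xb = 2 * Mball C Q r xb / r"

definition set_dist :: "'a::metric_space set \<Rightarrow> 'a set \<Rightarrow> real" where
  "set_dist P R = (INF p\<in>P. INF q\<in>R. dist p q)"

fun traj :: "real^'n^'n \<Rightarrow> real^'k^'n \<Rightarrow> real^'n \<Rightarrow> (nat \<Rightarrow> real^'k) \<Rightarrow> nat \<Rightarrow> real^'n" where
  "traj A B x0 u 0 = x0"
| "traj A B x0 u (Suc t) = A *v traj A B x0 u t + B *v u t"

definition tube_dist ::
  "real^'n^'n \<Rightarrow> real^'k^'n \<Rightarrow> real^'n^'m \<Rightarrow> (real^'m \<Rightarrow> real^'m^'m) \<Rightarrow> nat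
     \<Rightarrow> (nat \<Rightarrow> real^'k) \<Rightarrow> real^'n \<Rightarrow> real^'n \<Rightarrow> real" where
  "tube_dist A B C Q T u xb0 x0 =
     (\<Sum>t\<le>T. set_dist (out_set C Q (traj A B xb0 u t)) (out_set C Q (traj A B x0 u t)))"

definition fh_weakly_observable ::
  "real^'n^'n \<Rightarrow> real^'k^'n \<Rightarrow> real^'n^'m \<Rightarrow> (real^'m \<Rightarrow> real^'m^'m) \<Rightarrow> (real^'k) set
     \<Rightarrow> real^'n \<Rightarrow> bool" where
  "fh_weakly_observable A B C Q U xb0 \<longleftrightarrow>
     (\<exists>T>0. \<exists>N. open N \<and> xb0 \<in> N \<and>
        (\<forall>x0\<in>N. \<forall>u. (\<forall>t. u t \<in> U) \<longrightarrow>
            (tube_dist A B C Q T u xb0 x0 > 0 \<longleftrightarrow> dist xb0 x0 > 0)))"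

definition observability_regular ::
  "real^'n^'n \<Rightarrow> real^'k^'n \<Rightarrow> real^'n^'m \<Rightarrow> (real^'m \<Rightarrow> real^'m^'m) \<Rightarrow> (real^'k) set
     \<Rightarrow> (real^'n) set \<Rightarrow> real^'n \<Rightarrow> bool" where
  "observability_regular A B C Q U S xb0 \<longleftrightarrow>
     convex_on S (Lam C Q) \<and> (\<exists>K. \<forall>x\<in>S. \<bar>Lam C Q x\<bar> \<le> K) \<and>
     fh_weakly_observable A B C Q U xb0"

definition DOl ::
  "real^'n^'n \<Rightarrow> real^'n^'m \<Rightarrow> (real^'m \<Rightarrow> real^'m^'m) \<Rightarrow> real \<Rightarrow> real \<Rightarrow> nat
     \<Rightarrow> (nat \<Rightarrow> real^'n) \<Rightarrow> real" where
  "DOl A C Q r \<epsilon> T xs =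
     (\<Sum>t\<le>T. sigma_min (C ** matpow A t) * \<epsilon>
             - sigma_max (matpow A t) * \<epsilon> * Lip C Q r (xs t)
             - 2 * Lam C Q (xs t))"

text \<open>Concavity of a functional of state sequences x_{0:T} (only the entries
  t \<le> T matter) on a set D of sequences; this is the definition of
  concave_on written out for the sequence space.\<close>
definition seq_concave_on :: "(nat \<Rightarrow> real^'n) set \<Rightarrow> ((nat \<Rightarrow> real^'n) \<Rightarrow> real) \<Rightarrow> bool" where
  "seq_concave_on D F \<longleftrightarrow>
     (\<forall>xs\<in>D. \<forall>ys\<in>D. \<forall>a\<ge>0. \<forall>b\<ge>0. a + b = 1 \<longrightarrow>
        (\<lambda>t. a *\<^sub>R xs t + b *\<^sub>R ys t) \<in> D \<and>
        a * F xs + b * F ys \<le> F (\<lambda>t. a *\<^sub>R xs t + b *\<^sub>R ys t))"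

end

theory Submission imports Defs begin

lemma sym_inner:
  fixes N :: "real^'n^'n"
  assumes "transpose N = N" shows "x \<bullet> (N *v y) = (N *v x) \<bullet> y"
  by (metis dot_lmul_matrix transpose_matrix_vector assms)

lemma eig_finite:
  fixes N :: "real^'n^'n"
  assumes sym: "transpose N = N" shows "finite (eigenvalues N)"
proof -
  define f where "f c = (SOME v. v \<noteq> 0 \<and> N *v v = c *\<^sub>R v)" for c
  have f: "f c \<noteq> 0 \<and> N *v f c = c *\<^sub>R f c" if "c \<in> eigenvalues N" for c
  proof -
    have "\<exists>v. v \<noteq> 0 \<and> N *v v = c *\<^sub>R v" using that by (simp add: eigenvalues_def)
    then show ?thesis unfolding f_def by (rule someI_ex)
  qed
  have inj: "inj_on f (eigenvalues N)"
  proof (rule inj_onI)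
    fix c d assume c: "c \<in> eigenvalues N" and d: "d \<in> eigenvalues N" and e: "f c = f d"
    then have "c *\<^sub>R f c = d *\<^sub>R f c" using f[OF c] f[OF d] by metis
    then show "c = d" using f[OF c] by (simp add: scaleR_cancel_right)
  qed
  have orth: "pairwise orthogonal (f ` eigenvalues N)"
    unfolding pairwise_def orthogonal_def
  proof (clarify)
    fix c d assume c: "c \<in> eigenvalues N" and d: "d \<in> eigenvalues N" and ne: "f c \<noteq> f d"
    then have cd: "c \<noteq> d" by auto
    have "c * (f c \<bullet> f d) = (N *v f c) \<bullet> f d" using f[OF c] by simp
    also have "\<dots> = f c \<bullet> (N *v f d)" using sym_inner[OF sym] by simp
    also have "\<dots> = d * (f c \<bullet> f d)" using f[OF d] by simp
    finally show "f c \<bullet> f d = 0" using cd by simp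
  qed
  have "0 \<notin> f ` eigenvalues N" using f by auto
  then have "independent (f ` eigenvalues N)" using orth pairwise_orthogonal_independent by blast
  then have "finite (f ` eigenvalues N)" using independent_bound by blast
  then show ?thesis using inj finite_imageD by blast
qed

lemma eig_nonempty:
  fixes N :: "real^'n^'n"
  assumes sym: "transpose N = N" shows "eigenvalues N \<noteq> {}"
proof -
  let ?q = "\<lambda>x. x \<bullet> (N *v x)"
  have cont: "continuous_on (sphere 0 1) ?q"
    by (intro continuous_intros linear_continuous_on matrix_vector_mul_linear)
       (simp add: linear_conv_bounded_linear)
  have ne: "sphere (0::real^'n) 1 \<noteq> {}" by simp
  obtain v where v: "v \<in> sphere 0 1" and vmax: "\<And>y. y \<in> sphere 0 1 \<Longrightarrow> ?q y \<le> ?q v"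
    using continuous_attains_sup[OF compact_sphere ne cont] by blast
  define l where "l = ?q v"
  have nv: "norm v = 1" using v by simp
  have vv: "v \<bullet> v = 1" using nv by (simp add: norm_eq_1)
  define g where "g x = l * (x \<bullet> x) - ?q x" for x
  have g0: "g x \<ge> 0" for x
  proof (cases "x = 0")
    case True then show ?thesis by (simp add: g_def)
  next
    case False
    define y where "y = (1 / norm x) *\<^sub>R x"
    have y: "y \<in> sphere 0 1" using False by (simp add: y_def)
    have xy: "x = norm x *\<^sub>R y" using False by (simp add: y_def)
    have "?q x = (norm x)^2 * ?q y" by (subst (1 2) xy) (simp add: matrix_vector_mult_scaleR power2_eq_square)
    moreover have "x \<bullet> x = (norm x)^2" by (simp add: power2_norm_eq_inner)
    ultimately have "g x = (norm x)^2 * (l - ?q y)" by (simp add: g_def algebra_simps)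
    then show ?thesis using vmax[OF y] by (simp add: l_def)
  qed
  define u where "u = l *\<^sub>R v - N *v v"
  have gv: "g v = 0" by (simp add: g_def vv l_def)
  have sy: "v \<bullet> (N *v u) = u \<bullet> (N *v v)" using sym_inner[OF sym] by (simp add: inner_commute)
  have exp: "g (v + t *\<^sub>R u) = 2 * t * (u \<bullet> u) + t^2 * g u" for t
  proof -
    have "g (v + t *\<^sub>R u) = g v + t * (2 * (l * (v \<bullet> u)) - v \<bullet> (N *v u) - u \<bullet> (N *v v)) + t^2 * g u"
      by (simp add: g_def matrix_vector_right_distrib matrix_vector_mult_scaleR inner_add_left
          inner_add_right power2_eq_square algebra_simps inner_commute)
    also have "\<dots> = 2 * t * (u \<bullet> u) + t^2 * g u"
      unfolding gv sy by (simp add: u_def inner_diff_left inner_diff_right algebra_simps inner_commute)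
    finally show ?thesis .
  qed
  have "u = 0"
  proof (rule ccontr)
    assume "u \<noteq> 0"
    then have p: "u \<bullet> u > 0" by simp
    define s where "s = (u \<bullet> u) / (g u + 1)"
    have gu: "g u \<ge> 0" by (rule g0)
    have s: "s > 0" using p gu by (simp add: s_def)
    have sg: "s * g u < u \<bullet> u" using p gu by (simp add: s_def field_simps)
    have "g (v + (-s) *\<^sub>R u) = 2 * (-s) * (u \<bullet> u) + (-s)^2 * g u" by (rule exp)
    also have "\<dots> = s * (s * g u - 2 * (u \<bullet> u))" by (simp add: power2_eq_square algebra_simps)
    also have "\<dots> < 0"
    proof -
      have "s * g u - 2 * (u \<bullet> u) < 0" using sg p by linarith
      then show ?thesis by (rule mult_pos_neg[OF s])
    qed
    finally show False using g0 by (metis not_le)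
  qed
  then have "N *v v = l *\<^sub>R v" by (simp add: u_def)
  moreover have "v \<noteq> 0" using nv by auto
  ultimately show ?thesis unfolding eigenvalues_def by blast
qed

lemma sigma_max_nonneg:
  fixes M :: "real^'n^'m"
  shows "sigma_max M \<ge> 0"
proof -
  let ?N = "transpose M ** M"
  have sym: "transpose ?N = ?N" by (simp only: matrix_transpose_mul transpose_transpose)
  have nn: "c \<ge> 0" if "c \<in> eigenvalues ?N" for c
  proof -
    have ex: "\<exists>v. v \<noteq> 0 \<and> ?N *v v = c *\<^sub>R v" using that by (simp only: eigenvalues_def mem_Collect_eq)
    then obtain v where v: "v \<noteq> 0" "?N *v v = c *\<^sub>R v" by (elim exE conjE)
    have A: "c * (v \<bullet> v) = v \<bullet> (?N *v v)" by (simp only: v(2) inner_scaleR_right)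
    have B1: "?N *v v = transpose M *v (M *v v)" by (rule matrix_vector_mul_assoc[symmetric])
    have B2: "v \<bullet> (transpose M *v (M *v v)) = (M *v v) \<bullet> (M *v v)"
      by (simp only: dot_lmul_matrix[symmetric] vector_transpose_matrix)
    have C: "(M *v v) \<bullet> (M *v v) \<ge> 0" by (rule inner_ge_zero)
    have D: "v \<bullet> v > 0" using v(1) by simp
    have E0: "c * (v \<bullet> v) = (M *v v) \<bullet> (M *v v)" using A unfolding B1 B2 .
    have E: "c * (v \<bullet> v) \<ge> 0" using E0 C by linarith
    show ?thesis using E D by (simp add: zero_le_mult_iff)
  qed
  obtain c where c: "c \<in> eigenvalues ?N" using eig_nonempty[OF sym] by blast
  have "c \<le> lambda_max ?N" unfolding lambda_max_def using eig_finite[OF sym] c by simp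
  then have "lambda_max ?N \<ge> 0" using nn[OF c] by simp
  then show ?thesis unfolding sigma_max_def by simp
qed


lemma sup_conv:
  fixes f :: "real^'n \<Rightarrow> real"
  assumes cf: "convex_on S f" and K: "\<forall>x\<in>S. \<bar>f x\<bar> \<le> K" and r: "r > 0"
    and x: "cball x r \<subseteq> S" and y: "cball y r \<subseteq> S"
    and a: "a \<ge> 0" and b: "b \<ge> 0" and ab: "a + b = 1"
  shows "cball (a *\<^sub>R x + b *\<^sub>R y) r \<subseteq> S"
    and "(SUP z\<in>cball (a *\<^sub>R x + b *\<^sub>R y) r. f z)
           \<le> a * (SUP z\<in>cball x r. f z) + b * (SUP z\<in>cball y r. f z)"
proof -
  have cS: "convex S" using cf by (simp add: convex_on_def)
  have bdd: "bdd_above (f ` cball w r)" if "cball w r \<subseteq> S" for w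
    using that K by (intro bdd_aboveI2[where M=K]) force
  have key: "z \<in> S \<and> f z \<le> a * (SUP z\<in>cball x r. f z) + b * (SUP z\<in>cball y r. f z)"
    if z: "z \<in> cball (a *\<^sub>R x + b *\<^sub>R y) r" for z
  proof -
    define d where "d = z - (a *\<^sub>R x + b *\<^sub>R y)"
    have nd: "norm d \<le> r" using z by (simp add: d_def dist_norm norm_minus_commute)
    have xd: "x + d \<in> cball x r" using nd by (simp add: dist_norm)
    have yd: "y + d \<in> cball y r" using nd by (simp add: dist_norm)
    have zeq: "z = a *\<^sub>R (x + d) + b *\<^sub>R (y + d)"
    proof -
      have "a *\<^sub>R (x + d) + b *\<^sub>R (y + d) = a *\<^sub>R x + b *\<^sub>R y + (a + b) *\<^sub>R d"
        by (simp add: algebra_simps)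
      then show ?thesis using ab by (simp add: d_def)
    qed
    have xS: "x + d \<in> S" and yS: "y + d \<in> S" using xd yd x y by auto
    have zS: "z \<in> S" unfolding zeq using cS xS yS a b ab by (simp add: convexD)
    have "f z \<le> a * f (x + d) + b * f (y + d)"
      unfolding zeq using cf xS yS a b ab by (simp add: convex_on_def)
    also have "\<dots> \<le> a * (SUP z\<in>cball x r. f z) + b * (SUP z\<in>cball y r. f z)"
      using cSUP_upper[OF xd bdd[OF x]] cSUP_upper[OF yd bdd[OF y]] a b
      by (intro add_mono mult_left_mono) auto
    finally show ?thesis using zS by blast
  qed
  show "cball (a *\<^sub>R x + b *\<^sub>R y) r \<subseteq> S" using key by blast
  show "(SUP z\<in>cball (a *\<^sub>R x + b *\<^sub>R y) r. f z)
           \<le> a * (SUP z\<in>cball x r. f z) + b * (SUP z\<in>cball y r. f z)"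
    using r key by (intro cSUP_least) auto
qed

theorem theorem1:
  fixes A :: "real^'n^'n" and B :: "real^'k^'n" and C :: "real^'n^'m"
    and Q :: "real^'m \<Rightarrow> real^'m^'m" and U :: "(real^'k) set" and S :: "(real^'n) set"
    and xb0 :: "real^'n" and r \<epsilon> :: real and T :: nat
  assumes "observability_regular A B C Q U S xb0"
    and "\<And>x. transpose (Q (C *v x)) = Q (C *v x)"
    and "\<And>x v. v \<noteq> 0 \<Longrightarrow> v \<bullet> (Q (C *v x) *v v) > 0"
    and "r > 0" and "\<epsilon> > 0"
  shows "seq_concave_on {xs. \<forall>t\<le>T. cball (xs t) r \<subseteq> S} (DOl A C Q r \<epsilon> T)"
proof -
  have cf: "convex_on S (Lam C Q)" and "\<exists>K. \<forall>x\<in>S. \<bar>Lam C Q x\<bar> \<le> K"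
    using assms(1) by (auto simp: observability_regular_def)
  then obtain K where K: "\<forall>x\<in>S. \<bar>Lam C Q x\<bar> \<le> K" by blast
  have r: "r > 0" and ep: "\<epsilon> > 0" using assms by auto
  show ?thesis unfolding seq_concave_on_def
  proof (intro ballI allI impI conjI)
    fix xs ys :: "nat \<Rightarrow> real^'n" and a b :: real
    assume xs: "xs \<in> {xs. \<forall>t\<le>T. cball (xs t) r \<subseteq> S}" and ys: "ys \<in> {xs. \<forall>t\<le>T. cball (xs t) r \<subseteq> S}"
      and a: "a \<ge> 0" and b: "b \<ge> 0" and ab: "a + b = 1"
    note sc = sup_conv[OF cf K r _ _ a b ab]
    show "(\<lambda>t. a *\<^sub>R xs t + b *\<^sub>R ys t) \<in> {xs. \<forall>t\<le>T. cball (xs t) r \<subseteq> S}"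
      using xs ys sc(1) by auto
    have trm: "a * (sigma_min (C ** matpow A t) * \<epsilon> - sigma_max (matpow A t) * \<epsilon> * Lip C Q r (xs t) - 2 * Lam C Q (xs t))
      + b * (sigma_min (C ** matpow A t) * \<epsilon> - sigma_max (matpow A t) * \<epsilon> * Lip C Q r (ys t) - 2 * Lam C Q (ys t))
      \<le> sigma_min (C ** matpow A t) * \<epsilon> - sigma_max (matpow A t) * \<epsilon> * Lip C Q r (a *\<^sub>R xs t + b *\<^sub>R ys t)
         - 2 * Lam C Q (a *\<^sub>R xs t + b *\<^sub>R ys t)" if t: "t \<in> {..T}" for t
    proof -
      have cx: "cball (xs t) r \<subseteq> S" and cy: "cball (ys t) r \<subseteq> S" using xs ys t by auto
      have xS: "xs t \<in> S" and yS: "ys t \<in> S" using cx cy r by auto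
      define L1 where "L1 = Lip C Q r (xs t)"
      define L2 where "L2 = Lip C Q r (ys t)"
      define L where "L = Lip C Q r (a *\<^sub>R xs t + b *\<^sub>R ys t)"
      define l1 where "l1 = Lam C Q (xs t)"
      define l2 where "l2 = Lam C Q (ys t)"
      define l where "l = Lam C Q (a *\<^sub>R xs t + b *\<^sub>R ys t)"
      define s where "s = sigma_max (matpow A t) * \<epsilon>"
      define c where "c = sigma_min (C ** matpow A t) * \<epsilon>"
      have s0: "s \<ge> 0" unfolding s_def using ep by (intro mult_nonneg_nonneg sigma_max_nonneg) simp
      have ll: "l \<le> a * l1 + b * l2" unfolding l_def l1_def l2_def
        using cf xS yS a b ab by (simp add: convex_on_def)
      have M: "Mball C Q r (a *\<^sub>R xs t + b *\<^sub>R ys t) \<le> a * Mball C Q r (xs t) + b * Mball C Q r (ys t)"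
        unfolding Mball_def using sc(2)[OF cx cy] .
      have LL: "L \<le> a * L1 + b * L2"
      proof -
        have "L = 2 * Mball C Q r (a *\<^sub>R xs t + b *\<^sub>R ys t) / r" by (simp add: L_def Lip_def)
        also have "\<dots> \<le> 2 * (a * Mball C Q r (xs t) + b * Mball C Q r (ys t)) / r"
          using M r by (intro divide_right_mono) auto
        also have "\<dots> = a * L1 + b * L2" by (simp add: L1_def L2_def Lip_def add_divide_distrib mult.left_commute)
        finally show ?thesis .
      qed
      have "s * L \<le> s * (a * L1 + b * L2)" using LL s0 by (rule mult_left_mono)
      moreover have "s * (a * L1 + b * L2) = a * (s * L1) + b * (s * L2)" by (simp add: algebra_simps)
      moreover have "a * c + b * c = c" using ab by (metis distrib_right mult_1)
      ultimately have "a * (c - s * L1 - 2 * l1) + b * (c - s * L2 - 2 * l2) \<le> c - s * L - 2 * l"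
        using ll by (simp add: algebra_simps)
      then show ?thesis unfolding L1_def L2_def L_def l1_def l2_def l_def s_def c_def .
    qed
    show "a * DOl A C Q r \<epsilon> T xs + b * DOl A C Q r \<epsilon> T ys
          \<le> DOl A C Q r \<epsilon> T (\<lambda>t. a *\<^sub>R xs t + b *\<^sub>R ys t)"
      unfolding DOl_def sum_distrib_left sum.distrib[symmetric]
      by (rule sum_mono) (rule trm)
  qed
qed

end
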